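(* Let $m\ge3$, let $\tilde\omega$ be a symmetric fractional polymorphism of $\Gamma$ of arity $m-1$, and let $\tilde{\mathbb G}$ and $\mathbb G$ be as below. Then $\tilde{\mathbb G}\subseteq\mathbb G$.
   Context: $D$ finite, $\Gamma$ a finite set of cost functions $f:D^n\to\mathbb Q\cup\{\infty\}$, $\mathrm{dom} f=\{x:f(x)<\infty\}$. A $k$-ary fractional polymorphism: probability distribution $\nu$ on operations $g:D^k\to D$ with $\sum\nu(g)f(g(x^1,\dots,x^k))\le\frac1k\sum f(x^i)$ for $f\in\Gamma$, $x^i\in\mathrm{dom} f$ (componentwise); symmetric if all support operations are invariant under all permutations of arguments. Maps $\mathbf g=(g_1,\dots,g_m):D^m\to D^m$ act on $[D^n]^m$ coordinatewise; $f^m(x)=\frac1m\sum f(x^i)$; generalized fractional polymorphism of arity $m\to m$: finitely supported probability distribution $\rho$ on maps with $\sum\rho(\mathbf g)f^m(\mathbf g(x))\le f^m(x)$ for $f\in\Gamma$, $x\in[\mathrm{dom} f]^m$. $\Omega=\{\mathbf g:(g_{\pi(1)},\dots,g_{\pi(m)})(x)=\mathbf g(x_{\pi(1)},\dots,x_{\pi(m)})\ \forall x\in D^m,\pi\}$. $\omega$: generalized fractional polymorphism of arity $m\to m$ with support in $\Omega$ containing the support of every other such; $\mathbb G=\{\mathbf g_k\circ\dots\circ\mathbf g_1:k\ge0,\mathbf g_i\in\mathrm{supp}(\omega)\}$. For $x\in D^m$ and $k\in[m]$, $x_{-k}\in D^{m-1}$ is $x$ with the $k$-th entry deleted. For $s\in\mathrm{supp}(\tilde\omega)$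 define $\mathbb 1^s:D^m\to D^m$ by $\mathbb 1^s(x)=(s(x_{-1}),\dots,s(x_{-m}))$, and $\tilde{\mathbb G}=\{\mathbb 1^{s_k}\circ\dots\circ\mathbb 1^{s_1}:k\ge0,s_i\in\mathrm{supp}(\tilde\omega)\}$ (identity for $k=0$). *)

theory Defs
  imports Main "HOL-Library.FuncSet" "HOL-Library.Extended_Real" "HOL-Combinatorics.Permutations"
begin

definition tuples :: "nat \<Rightarrow> 'd list set" where
  "tuples k = {x. length x = k}"

(* k-ary operations D^k -> D, represented extensionally (undefined off D^k) *)
definition ops :: "nat \<Rightarrow> ('d list \<Rightarrow> 'd) set" where
  "ops k = (tuples k \<rightarrow>\<^sub>E (UNIV :: 'd set))"

definition maps :: "nat \<Rightarrow> ('d list \<Rightarrow> 'd list) set" where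
  "maps m = (tuples m \<rightarrow>\<^sub>E tuples m)"

definition language :: "(nat \<times> ('d list \<Rightarrow> ereal)) set \<Rightarrow> bool" where
  "language \<Gamma> \<longleftrightarrow> finite \<Gamma> \<and>
     (\<forall>(n, f) \<in> \<Gamma>. \<forall>x \<in> tuples n. f x = \<infinity> \<or> (\<exists>q::rat. f x = ereal (of_rat q)))"

definition dom_cost :: "nat \<Rightarrow> ('d list \<Rightarrow> ereal) \<Rightarrow> 'd list set" where
  "dom_cost n f = {x \<in> tuples n. f x < \<infinity>}"

definition supp :: "('a \<Rightarrow> real) \<Rightarrow> 'a set" where
  "supp \<nu> = {g. \<nu> g \<noteq> 0}"

definition prob_dist :: "'a set \<Rightarrow> ('a \<Rightarrow> real) \<Rightarrow> bool" where
  "prob_dist A \<nu> \<longleftrightarrow> finite (supp \<nu>) \<and> supp \<nu> \<subseteq> A \<and> (\<forall>g. \<nu> g \<ge> 0) \<and> (\<Sum>g\<in>supp \<nu>. \<nu> g) = 1"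

definition apply_op :: "('d list \<Rightarrow> 'd) \<Rightarrow> nat \<Rightarrow> nat \<Rightarrow> 'd list list \<Rightarrow> 'd list" where
  "apply_op g k n xs = map (\<lambda>j. g (map (\<lambda>l. xs ! l ! j) [0..<k])) [0..<n]"

definition apply_map :: "('d list \<Rightarrow> 'd list) \<Rightarrow> nat \<Rightarrow> nat \<Rightarrow> 'd list list \<Rightarrow> 'd list list" where
  "apply_map g m n xs =
     map (\<lambda>i. map (\<lambda>j. g (map (\<lambda>l. xs ! l ! j) [0..<m]) ! i) [0..<n]) [0..<m]"

definition avg_cost :: "nat \<Rightarrow> ('d list \<Rightarrow> ereal) \<Rightarrow> 'd list list \<Rightarrow> ereal" where
  "avg_cost m f xs = ereal (1 / real m) * (\<Sum>i<m. f (xs ! i))"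

definition fractional_polymorphism ::
  "(nat \<times> ('d list \<Rightarrow> ereal)) set \<Rightarrow> nat \<Rightarrow> (('d list \<Rightarrow> 'd) \<Rightarrow> real) \<Rightarrow> bool" where
  "fractional_polymorphism \<Gamma> k \<nu> \<longleftrightarrow> prob_dist (ops k) \<nu> \<and>
     (\<forall>(n, f) \<in> \<Gamma>. \<forall>xs. length xs = k \<longrightarrow> (\<forall>i<k. xs ! i \<in> dom_cost n f) \<longrightarrow>
        (\<Sum>g\<in>supp \<nu>. ereal (\<nu> g) * f (apply_op g k n xs)) \<le> avg_cost k f xs)"

definition symmetric_op :: "nat \<Rightarrow> ('d list \<Rightarrow> 'd) \<Rightarrow> bool" where
  "symmetric_op k g \<longleftrightarrow> (\<forall>\<pi> x. \<pi> permutes {0..<k} \<longrightarrow> x \<in> tuples k \<longrightarrow>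
      g (map (\<lambda>i. x ! \<pi> i) [0..<k]) = g x)"

definition symmetric_fractional_polymorphism ::
  "(nat \<times> ('d list \<Rightarrow> ereal)) set \<Rightarrow> nat \<Rightarrow> (('d list \<Rightarrow> 'd) \<Rightarrow> real) \<Rightarrow> bool" where
  "symmetric_fractional_polymorphism \<Gamma> k \<nu> \<longleftrightarrow>
     fractional_polymorphism \<Gamma> k \<nu> \<and> (\<forall>g \<in> supp \<nu>. symmetric_op k g)"

definition generalized_fractional_polymorphism ::
  "(nat \<times> ('d list \<Rightarrow> ereal)) set \<Rightarrow> nat \<Rightarrow> (('d list \<Rightarrow> 'd list) \<Rightarrow> real) \<Rightarrow> bool" where
  "generalized_fractional_polymorphism \<Gamma> m \<rho> \<longleftrightarrow> prob_dist (maps m) \<rho> \<and>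
     (\<forall>(n, f) \<in> \<Gamma>. \<forall>xs. length xs = m \<longrightarrow> (\<forall>i<m. xs ! i \<in> dom_cost n f) \<longrightarrow>
        (\<Sum>g\<in>supp \<rho>. ereal (\<rho> g) * avg_cost m f (apply_map g m n xs)) \<le> avg_cost m f xs)"

definition Omega :: "nat \<Rightarrow> ('d list \<Rightarrow> 'd list) set" where
  "Omega m = {g \<in> maps m. \<forall>\<pi> x. \<pi> permutes {0..<m} \<longrightarrow> x \<in> tuples m \<longrightarrow>
      map (\<lambda>i. g x ! \<pi> i) [0..<m] = g (map (\<lambda>i. x ! \<pi> i) [0..<m])}"

inductive_set comp_closure :: "nat \<Rightarrow> ('d list \<Rightarrow> 'd list) set \<Rightarrow> ('d list \<Rightarrow> 'd list) set"
  for m A where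
  ident: "(\<lambda>x\<in>tuples m. x) \<in> comp_closure m A"
| step: "h \<in> comp_closure m A \<Longrightarrow> g \<in> A \<Longrightarrow> compose (tuples m) g h \<in> comp_closure m A"

(* x_{-k}: delete the k-th entry (0-indexed) *)
definition del :: "nat \<Rightarrow> 'a list \<Rightarrow> 'a list" where
  "del k x = take k x @ drop (Suc k) x"

definition one_s :: "nat \<Rightarrow> ('d list \<Rightarrow> 'd) \<Rightarrow> 'd list \<Rightarrow> 'd list" where
  "one_s m s = (\<lambda>x\<in>tuples m. map (\<lambda>k. s (del k x)) [0..<m])"

end

theory Submission imports Defs begin

lemma length_del[simp]: "i < length ys \<Longrightarrow> length (del i ys) = length ys - 1"
  by (simp add: del_def)

lemma nth_del: "i < length ys \<Longrightarrow> l < length ys - 1 \<Longrightarrow>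
   del i ys ! l = ys ! (if l < i then l else Suc l)"
  by (auto simp: del_def nth_append min_def)

lemma mset_del: "i < length ys \<Longrightarrow> mset ys = add_mset (ys ! i) (mset (del i ys))"
proof -
  assume "i < length ys"
  then have "ys = take i ys @ ys!i # drop (Suc i) ys" by (rule id_take_nth_drop)
  then have "mset ys = mset (take i ys @ ys!i # drop (Suc i) ys)" by simp
  then show ?thesis by (simp add: del_def)
qed

lemma sum_del: fixes g :: "'a \<Rightarrow> real"
  assumes "i < length ys"
  shows "(\<Sum>l<length ys - 1. g (del i ys ! l)) = (\<Sum>l<length ys. g (ys ! l)) - g (ys ! i)"
proof -
  have a: "\<And>zs. (\<Sum>l<length zs. g (zs ! l)) = sum_list (map g zs)"
    by (simp add: sum_list_sum_nth atLeast0LessThan)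
  have "sum_list (map g ys) = sum_mset (image_mset g (mset ys))" by (metis mset_map sum_mset_sum_list)
  also have "... = g (ys!i) + sum_mset (image_mset g (mset (del i ys)))"
    using mset_del[OF assms] by (metis image_mset_add_mset sum_mset.insert)
  also have "sum_mset (image_mset g (mset (del i ys))) = sum_list (map g (del i ys))"
    by (metis mset_map sum_mset_sum_list)
  finally show ?thesis using a[of ys] a[of "del i ys"] assms by simp
qed

lemma sym_mset:
  assumes "symmetric_op k s" "length y = k" "mset z = mset y"
  shows "s z = s y"
proof -
  obtain p where p: "p permutes {..<length y}" "permute_list p y = z"
    using mset_eq_permutation[OF assms(3)] by blast
  have p2: "p permutes {0..<k}" using p(1) assms(2) by (simp add: atLeast0LessThan)
  have "z = map (\<lambda>i. y ! p i) [0..<k]" using p(2) assms(2) by (simp add: permute_list_def)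
  moreover have "y \<in> tuples k" using assms(2) by (simp add: tuples_def)
  ultimately show ?thesis using assms(1) p2 unfolding symmetric_op_def by blast
qed

lemma one_s_Omega:
  fixes s :: "'d list \<Rightarrow> 'd"
  assumes sym: "symmetric_op (m - 1) s"
  shows "one_s m s \<in> Omega m"
  unfolding Omega_def
proof (intro CollectI conjI allI impI)
  show "one_s m s \<in> maps m"
    by (auto simp: maps_def one_s_def tuples_def)
  fix \<pi> and x :: "'d list" assume p: "\<pi> permutes {0..<m}" and x: "x \<in> tuples m"
  have lx: "length x = m" using x by (simp add: tuples_def)
  define xp where "xp = map (\<lambda>i. x ! \<pi> i) [0..<m]"
  have xpt: "xp \<in> tuples m" by (simp add: xp_def tuples_def)
  have pl: "\<pi> permutes {..<length x}" using p lx by (simp add: atLeast0LessThan)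
  have mxp: "mset xp = mset x"
    using mset_permute_list[OF pl] lx by (simp add: permute_list_def xp_def)
  have "s (del (\<pi> k) x) = s (del k xp)" if k: "k < m" for k
  proof -
    have pk: "\<pi> k < m" using p k by (meson atLeastLessThan_iff permutes_in_image zero_le)
    have lxp: "length xp = m" by (simp add: xp_def)
    have xpk: "xp ! k = x ! \<pi> k" using k by (simp add: xp_def)
    have "add_mset (x ! \<pi> k) (mset (del k xp)) = add_mset (x ! \<pi> k) (mset (del (\<pi> k) x))"
      using mset_del[of k xp] mset_del[of "\<pi> k" x] k pk lx lxp xpk mxp by simp
    then have "mset (del k xp) = mset (del (\<pi> k) x)" by simp
    then show ?thesis using sym_mset[OF sym, of "del (\<pi> k) x" "del k xp"] pk lx by simp
  qed
  moreover have "\<pi> i < m" if "i < m" for i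
    using p that by (meson atLeastLessThan_iff permutes_in_image zero_le)
  ultimately show "map (\<lambda>i. one_s m s x ! \<pi> i) [0..<m] = one_s m s (map (\<lambda>i. x ! \<pi> i) [0..<m])"
    using x xpt unfolding xp_def one_s_def by (auto intro!: nth_equalityI)
qed

lemma one_s_inj:
  assumes "m \<ge> 1"
  shows "inj_on (one_s m) (ops (m - 1))"
proof (rule inj_onI)
  fix s1 s2 :: "'d list \<Rightarrow> 'd" assume s1: "s1 \<in> ops (m - 1)" and s2: "s2 \<in> ops (m - 1)"
    and eq: "one_s m s1 = one_s m s2"
  show "s1 = s2"
  proof
    fix y
    show "s1 y = s2 y"
    proof (cases "y \<in> tuples (m - 1)")
      case True
      define x where "x = y @ [undefined]"
      have xt: "x \<in> tuples m" using True assms by (simp add: x_def tuples_def)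
      have d: "del (m - 1) x = y" using True by (simp add: x_def del_def tuples_def)
      have "\<And>s. one_s m s x ! (m - 1) = s y" using xt d assms by (simp add: one_s_def)
      then show ?thesis using eq by metis
    next
      case False
      then show ?thesis using s1 s2 by (simp add: ops_def PiE_def extensional_def)
    qed
  qed
qed

lemma apply_map_one_s:
  assumes "length xs = m"
  shows "apply_map (one_s m s) m n xs = map (\<lambda>i. apply_op s (m - 1) n (del i xs)) [0..<m]"
proof -
  have "one_s m s (map (\<lambda>l. xs ! l ! j) [0..<m]) ! i = s (map (\<lambda>l. del i xs ! l ! j) [0..<m - 1])"
    if i: "i < m" for i j
  proof -
    have "del i (map (\<lambda>l. xs ! l ! j) [0..<m]) = map (\<lambda>l. del i xs ! l ! j) [0..<m - 1]"
      using i assms by (auto intro!: nth_equalityI simp: nth_del)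
    then show ?thesis using i by (simp add: one_s_def tuples_def)
  qed
  then show ?thesis by (simp add: apply_map_def apply_op_def)
qed

lemma closure_mono: "A \<subseteq> B \<Longrightarrow> comp_closure m A \<subseteq> comp_closure m B"
proof
  fix g assume AB: "A \<subseteq> B" and g: "g \<in> comp_closure m A"
  from g show "g \<in> comp_closure m B"
  proof (induction rule: comp_closure.induct)
    case ident show ?case by (rule comp_closure.ident)
  next
    case (step h g) then show ?case using AB by (blast intro: comp_closure.step)
  qed
qed

theorem proposition7p6:
  fixes \<Gamma> :: "(nat \<times> ('d::finite list \<Rightarrow> ereal)) set"
    and m :: nat
    and \<omega> :: "('d list \<Rightarrow> 'd list) \<Rightarrow> real"
    and \<omega>' :: "('d list \<Rightarrow> 'd) \<Rightarrow> real"
  assumes "language \<Gamma>"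
    and "m \<ge> 3"
    and "generalized_fractional_polymorphism \<Gamma> m \<omega>"
    and "supp \<omega> \<subseteq> Omega m"
    and "\<forall>\<rho>. generalized_fractional_polymorphism \<Gamma> m \<rho> \<and> supp \<rho> \<subseteq> Omega m
            \<longrightarrow> supp \<rho> \<subseteq> supp \<omega>"
    and "symmetric_fractional_polymorphism \<Gamma> (m - 1) \<omega>'"
  shows "comp_closure m (one_s m ` supp \<omega>') \<subseteq> comp_closure m (supp \<omega>)"
proof -
  define S where "S = supp \<omega>'"
  have pd: "prob_dist (ops (m - 1)) \<omega>'" and fp: "fractional_polymorphism \<Gamma> (m - 1) \<omega>'"
    and sym: "\<And>s. s \<in> S \<Longrightarrow> symmetric_op (m - 1) s"
    using assms(6) by (auto simp: symmetric_fractional_polymorphism_def fractional_polymorphism_def S_def)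
  have finS: "finite S" and Sops: "S \<subseteq> ops (m - 1)" and nn: "\<And>g. \<omega>' g \<ge> 0"
    and sum1: "(\<Sum>g\<in>S. \<omega>' g) = 1"
    using pd by (auto simp: prob_dist_def S_def)
  have pos: "\<And>s. s \<in> S \<Longrightarrow> \<omega>' s > 0" using nn by (force simp: S_def supp_def less_le)
  have "inj_on (one_s m) (ops (m - 1))" using assms(2) by (intro one_s_inj) simp
  then have inj: "inj_on (one_s m) S" using Sops by (rule inj_on_subset)
  define \<rho> where "\<rho> g = (if g \<in> one_s m ` S then \<omega>' (the_inv_into S (one_s m) g) else 0)" for g
  have \<rho>os: "\<And>s. s \<in> S \<Longrightarrow> \<rho> (one_s m s) = \<omega>' s"
    using inj by (simp add: \<rho>_def the_inv_into_f_f)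
  have supp\<rho>: "supp \<rho> = one_s m ` S"
  proof
    show "supp \<rho> \<subseteq> one_s m ` S" by (auto simp: supp_def \<rho>_def split: if_splits)
    show "one_s m ` S \<subseteq> supp \<rho>" using \<rho>os pos by (force simp: supp_def)
  qed
  have reidx: "(\<Sum>g\<in>supp \<rho>. H g (\<rho> g)) = (\<Sum>s\<in>S. H (one_s m s) (\<omega>' s))"
    for H :: "('d list \<Rightarrow> 'd list) \<Rightarrow> real \<Rightarrow> 'b::comm_monoid_add"
    unfolding supp\<rho> by (rule sum.reindex_cong[OF inj refl]) (simp add: \<rho>os)
  have Om: "supp \<rho> \<subseteq> Omega m" unfolding supp\<rho> using sym by (auto intro: one_s_Omega)
  have pd\<rho>: "prob_dist (maps m) \<rho>"
    unfolding prob_dist_def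
  proof (intro conjI allI)
    show "finite (supp \<rho>)" using supp\<rho> finS by simp
    show "supp \<rho> \<subseteq> maps m" using Om by (auto simp: Omega_def)
    show "0 \<le> \<rho> g" for g using nn by (simp add: \<rho>_def)
    show "sum \<rho> (supp \<rho>) = 1" using reidx[of "\<lambda>g r. r"] sum1 by simp
  qed
  have ineq\<rho>: "(\<Sum>g\<in>supp \<rho>. ereal (\<rho> g) * avg_cost m f (apply_map g m n xs)) \<le> avg_cost m f xs"
    if nG: "(n, f) \<in> \<Gamma>" and lxs: "length xs = m" and domx: "\<And>l. l < m \<Longrightarrow> xs ! l \<in> dom_cost n f"
    for n f xs
    proof -
      define R where "R y = real_of_ereal (f y)" for y
      have L0: "\<forall>(n, f)\<in>\<Gamma>. \<forall>x\<in>tuples n. f x = \<infinity> \<or> (\<exists>q::rat. f x = ereal (of_rat q))"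
        using assms(1) unfolding language_def by (rule conjunct2)
      have L: "f y = \<infinity> \<or> (\<exists>q::rat. f y = ereal (of_rat q))" if "y \<in> tuples n" for y
        using bspec[OF L0 nG] that by simp
      have fin: "f y = ereal (R y)" if "y \<in> tuples n" "f y \<noteq> \<infinity>" for y
        using L[OF that(1)] that(2) by (auto simp: R_def)
      have notm: "f y \<noteq> -\<infinity>" if "y \<in> tuples n" for y
        using L[OF that] by auto
      have FP0: "\<forall>(n, f)\<in>\<Gamma>. \<forall>xs. length xs = m - 1 \<longrightarrow> (\<forall>i<m - 1. xs ! i \<in> dom_cost n f) \<longrightarrow>
        (\<Sum>g\<in>supp \<omega>'. ereal (\<omega>' g) * f (apply_op g (m - 1) n xs)) \<le> avg_cost (m - 1) f xs"
        using fp unfolding fractional_polymorphism_def by (rule conjunct2)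
      have FP: "(\<Sum>s\<in>S. ereal (\<omega>' s) * f (apply_op s (m - 1) n ys)) \<le> avg_cost (m - 1) f ys"
        if "length ys = m - 1" "\<forall>i<m - 1. ys ! i \<in> dom_cost n f" for ys
        using bspec[OF FP0 nG] that unfolding S_def by simp
      have fx: "f (xs ! l) = ereal (R (xs ! l))" if "l < m" for l
        using domx[OF that] fin by (auto simp: dom_cost_def)
      define T where "T i s = apply_op s (m - 1) n (del i xs)" for i s
      have Tt: "T i s \<in> tuples n" for i s by (simp add: T_def apply_op_def tuples_def)
      have m1: "real (m - 1) = real m - 1" using assms(2) by (simp add: of_nat_diff)
      define Sm where "Sm = (\<Sum>l<m. R (xs ! l))"
      have key: "(\<forall>s\<in>S. f (T i s) = ereal (R (T i s))) \<and>
                 (\<Sum>s\<in>S. \<omega>' s * R (T i s)) \<le> 1 / (real m - 1) * (Sm - R (xs ! i))"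
        if i: "i < m" for i
      proof -
        have ldel: "length (del i xs) = m - 1" using i lxs by simp
        have ddom: "\<forall>l<m - 1. del i xs ! l \<in> dom_cost n f"
          using i lxs domx by (auto simp: nth_del)
        have ineq: "(\<Sum>s\<in>S. ereal (\<omega>' s) * f (T i s)) \<le> avg_cost (m - 1) f (del i xs)"
          using FP[OF ldel ddom] unfolding T_def .
        have "(\<Sum>l<m - 1. f (del i xs ! l)) = (\<Sum>l<m - 1. ereal (R (del i xs ! l)))"
          using ddom fin by (intro sum.cong) (auto simp: dom_cost_def)
        also have "... = ereal (Sm - R (xs ! i))"
          using sum_del[of i xs R] i lxs by (simp add: Sm_def)
        finally have avg: "avg_cost (m - 1) f (del i xs) = ereal (1 / (real m - 1) * (Sm - R (xs ! i)))"
          using assms(2) by (simp add: avg_cost_def of_nat_diff)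
        have allfin: "f (T i s') = ereal (R (T i s'))" if "s' \<in> S" for s'
        proof (rule fin[OF Tt], rule notI)
          assume inf: "f (T i s') = \<infinity>"
          have "ereal (\<omega>' s') * f (T i s') = \<infinity>" using inf pos[OF that] by simp
          then have "(\<Sum>s\<in>S. ereal (\<omega>' s) * f (T i s)) = \<infinity>"
            unfolding sum_Pinfty using finS that by blast
          then show False using ineq avg by simp
        qed
        have "(\<Sum>s\<in>S. ereal (\<omega>' s) * f (T i s)) = (\<Sum>s\<in>S. ereal (\<omega>' s * R (T i s)))"
          by (rule sum.cong) (simp_all add: allfin)
        also have "\<dots> = ereal (\<Sum>s\<in>S. \<omega>' s * R (T i s))" by (rule sum_ereal)
        finally have eqs: "(\<Sum>s\<in>S. ereal (\<omega>' s) * f (T i s)) = ereal (\<Sum>s\<in>S. \<omega>' s * R (T i s))" .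
        from eqs have ineq2: "(\<Sum>s\<in>S. \<omega>' s * R (T i s)) \<le> 1 / (real m - 1) * (Sm - R (xs ! i))"
          using ineq avg by simp
        show ?thesis using allfin ineq2 by blast
      qed
      have A: "avg_cost m f (apply_map (one_s m s) m n xs) = ereal (1 / real m * (\<Sum>i<m. R (T i s)))"
        if sS: "s \<in> S" for s
      proof -
        have "(\<Sum>i<m. f (apply_map (one_s m s) m n xs ! i)) = (\<Sum>i<m. ereal (R (T i s)))"
        proof (rule sum.cong)
          fix i assume "i \<in> {..<m}"
          then have i: "i < m" by simp
          have "apply_map (one_s m s) m n xs ! i = T i s"
            using i by (simp add: apply_map_one_s[OF lxs] T_def)
          then show "f (apply_map (one_s m s) m n xs ! i) = ereal (R (T i s))"
            using key[OF i] sS by simp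
        qed simp
        also have "\<dots> = ereal (\<Sum>i<m. R (T i s))" by (rule sum_ereal)
        finally show ?thesis by (simp add: avg_cost_def)
      qed
      have "(\<Sum>g\<in>supp \<rho>. ereal (\<rho> g) * avg_cost m f (apply_map g m n xs))
          = (\<Sum>s\<in>S. ereal (\<omega>' s) * avg_cost m f (apply_map (one_s m s) m n xs))"
        by (rule reidx)
      also have "\<dots> = (\<Sum>s\<in>S. ereal (\<omega>' s * (1 / real m * (\<Sum>i<m. R (T i s)))))"
        by (rule sum.cong) (simp_all add: A)
      also have "\<dots> = ereal (\<Sum>s\<in>S. \<omega>' s * (1 / real m * (\<Sum>i<m. R (T i s))))"
        by (rule sum_ereal)
      finally have LHS: "(\<Sum>g\<in>supp \<rho>. ereal (\<rho> g) * avg_cost m f (apply_map g m n xs))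
          = ereal (\<Sum>s\<in>S. \<omega>' s * (1 / real m * (\<Sum>i<m. R (T i s))))" .
      have "(\<Sum>l<m. f (xs ! l)) = (\<Sum>l<m. ereal (R (xs ! l)))"
        by (rule sum.cong) (simp_all add: fx)
      also have "\<dots> = ereal Sm" unfolding Sm_def by (rule sum_ereal)
      finally have RHS: "avg_cost m f xs = ereal (1 / real m * Sm)" by (simp add: avg_cost_def)
      have "(\<Sum>s\<in>S. \<omega>' s * (1 / real m * (\<Sum>i<m. R (T i s))))
          = 1 / real m * (\<Sum>i<m. \<Sum>s\<in>S. \<omega>' s * R (T i s))"
        by (simp add: sum_distrib_left sum.swap[of _ S] algebra_simps)
      also have "\<dots> \<le> 1 / real m * (\<Sum>i<m. 1 / (real m - 1) * (Sm - R (xs ! i)))"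
        using key by (intro mult_left_mono sum_mono) auto
      also have "(\<Sum>i<m. 1 / (real m - 1) * (Sm - R (xs ! i))) = 1 / (real m - 1) * (real m * Sm - Sm)"
        unfolding sum_distrib_left[symmetric] sum_subtractf by (simp add: Sm_def)
      also have "\<dots> = Sm"
      proof -
        have "real m - 1 \<noteq> 0" using assms(2) by simp
        then show ?thesis by (simp add: field_simps)
      qed
      finally show ?thesis unfolding LHS RHS by simp
    qed
  have gfp: "generalized_fractional_polymorphism \<Gamma> m \<rho>"
    unfolding generalized_fractional_polymorphism_def using pd\<rho> ineq\<rho> by auto
  then have "one_s m ` S \<subseteq> supp \<omega>" using assms(5) Om supp\<rho> by blast
  then show ?thesis unfolding S_def by (rule closure_mono)
qed
end
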